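(* Let $G$ and $H$ be finite simple graphs, neither complete, not both equal to a disjoint union of two complete graphs, and suppose ${\rm diam}(G\diamond H)=3$. Then for vertices $(g,h),(g',h')$ of $G\diamond H$, $(g,h)(g',h')\in E((G\diamond H)_{SR})$ if and only if the (unordered) pair satisfies at least one of the following, where in (iv) and (v) either vertex may play the role of $(g,h)$: (i) $(g,h)\neq(g',h')$ and $N_{G\diamond H}[(g,h)]=N_{G\diamond H}[(g',h')]$; (ii) $d_{G\diamond H}((g,h),(g',h'))=2$ and neither $(g,h)$ nor $(g',h')$ is a boundary vertex of $G\diamond H$; (iii) $d_{G\diamond H}((g,h),(g',h'))=3$; (iv) $g$ and $g'$ are universal vertices of $G$, $d_H(h,h')=2$ and $hh'\in E(H_{SR})$; or $h$ and $h'$ are universal vertices of $H$, $d_G(g,g')=2$ and $gg'\in E(G_{SR})$; (v) $g$ is universal in $G$, $g'$ is not universal in $G$, $d_H(h,h')=2$, $d_H(h,h'')\le 2$ for every $h''\in N_H[h']$, and $h'$ belongs to no $\gamma_H$-pair; or $h$ is universal in $H$, $h'$ is not universal in $H$, $d_G(g,g')=2$, $d_G(g,g'')\le 2$ for every $g''\in N_G[g']$, and $g'$ belongs to no $\gamma_G$-pair.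
   Context: The modular product $G\diamond H$ has vertex set $V(G)\times V(H)$; distinct vertices $(g,h)$ and $(g',h')$ are adjacent iff ($g=g'$ and $hh'\in E(H)$), or ($gg'\in E(G)$ and $h=h'$), or ($gg'\in E(G)$ and $hh'\in E(H)$), or ($g\neq g'$, $h\neq h'$, $gg'\notin E(G)$ and $hh'\notin E(H)$). A vertex $v$ is universal in $X$ if $N_X[v]=V(X)$. A boundary vertex of a connected graph $X$ is a vertex $u$ for which some $v$ has $d_X(u,v)={\rm diam}(X)$. A $\gamma_G$-pair is a set $\{g,g'\}$ of two distinct vertices of $G$ such that $N_G[g]\cap N_G[g']=\emptyset$ and $N_G[g]\cup N_G[g']=V(G)$. Two distinct vertices $u,v$ of a graph $X$ lying in the same connected component are mutually maximally distant if there is no $x\in N_X(u)$ with $d_X(x,v)=d_X(u,v)+1$ and no $y\in N_X(v)$ with $d_X(y,u)=d_X(u,v)+1$; the strong resolving graph $X_{SR}$ has as edges exactly the mutually maximally distant pairs. *)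

theory Defs
  imports Main "HOL-Library.Extended_Nat"
begin

definition simple_graph :: "'a set \<Rightarrow> ('a \<Rightarrow> 'a \<Rightarrow> bool) \<Rightarrow> bool" where
  "simple_graph V E \<longleftrightarrow> finite V \<and> (\<forall>x y. E x y \<longrightarrow> x \<in> V \<and> y \<in> V)
     \<and> (\<forall>x y. E x y \<longrightarrow> E y x) \<and> (\<forall>x. \<not> E x x)"

inductive walk_len :: "'a set \<Rightarrow> ('a \<Rightarrow> 'a \<Rightarrow> bool) \<Rightarrow> nat \<Rightarrow> 'a \<Rightarrow> 'a \<Rightarrow> bool"
  for V E where
  walk0: "x \<in> V \<Longrightarrow> walk_len V E 0 x x"
| walkS: "E x y \<Longrightarrow> x \<in> V \<Longrightarrow> walk_len V E n y z \<Longrightarrow> walk_len V E (Suc n) x z"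

text \<open>Distance (infinite if not in the same component).\<close>
definition gdist :: "'a set \<Rightarrow> ('a \<Rightarrow> 'a \<Rightarrow> bool) \<Rightarrow> 'a \<Rightarrow> 'a \<Rightarrow> enat" where
  "gdist V E u v = Inf {enat n | n. walk_len V E n u v}"

definition gdiam :: "'a set \<Rightarrow> ('a \<Rightarrow> 'a \<Rightarrow> bool) \<Rightarrow> enat" where
  "gdiam V E = Sup {gdist V E u v | u v. u \<in> V \<and> v \<in> V}"

definition connected_graph :: "'a set \<Rightarrow> ('a \<Rightarrow> 'a \<Rightarrow> bool) \<Rightarrow> bool" where
  "connected_graph V E \<longleftrightarrow> (\<forall>u\<in>V. \<forall>v\<in>V. gdist V E u v < \<infinity>)"

definition closed_nbhd :: "'a set \<Rightarrow> ('a \<Rightarrow> 'a \<Rightarrow> bool) \<Rightarrow> 'a \<Rightarrow> 'a set" where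
  "closed_nbhd V E v = {u \<in> V. u = v \<or> E v u}"

definition universal :: "'a set \<Rightarrow> ('a \<Rightarrow> 'a \<Rightarrow> bool) \<Rightarrow> 'a \<Rightarrow> bool" where
  "universal V E v \<longleftrightarrow> v \<in> V \<and> closed_nbhd V E v = V"

definition boundary_vertex :: "'a set \<Rightarrow> ('a \<Rightarrow> 'a \<Rightarrow> bool) \<Rightarrow> 'a \<Rightarrow> bool" where
  "boundary_vertex V E u \<longleftrightarrow> u \<in> V \<and> (\<exists>v\<in>V. gdist V E u v = gdiam V E)"

definition gamma_pair :: "'a set \<Rightarrow> ('a \<Rightarrow> 'a \<Rightarrow> bool) \<Rightarrow> 'a \<Rightarrow> 'a \<Rightarrow> bool" where
  "gamma_pair V E g g' \<longleftrightarrow> g \<in> V \<and> g' \<in> V \<and> g \<noteq> g'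
     \<and> closed_nbhd V E g \<inter> closed_nbhd V E g' = {}
     \<and> closed_nbhd V E g \<union> closed_nbhd V E g' = V"

text \<open>Mutually maximally distant vertices = edges of the strong resolving graph.\<close>
definition mmd :: "'a set \<Rightarrow> ('a \<Rightarrow> 'a \<Rightarrow> bool) \<Rightarrow> 'a \<Rightarrow> 'a \<Rightarrow> bool" where
  "mmd V E u v \<longleftrightarrow> u \<in> V \<and> v \<in> V \<and> u \<noteq> v \<and> gdist V E u v < \<infinity>
     \<and> (\<forall>x. E u x \<longrightarrow> gdist V E x v \<noteq> gdist V E u v + 1)
     \<and> (\<forall>y. E v y \<longrightarrow> gdist V E y u \<noteq> gdist V E u v + 1)"

abbreviation SR_edge :: "'a set \<Rightarrow> ('a \<Rightarrow> 'a \<Rightarrow> bool) \<Rightarrow> 'a \<Rightarrow> 'a \<Rightarrow> bool" where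
  "SR_edge V E u v \<equiv> mmd V E u v"

definition complete_graph :: "'a set \<Rightarrow> ('a \<Rightarrow> 'a \<Rightarrow> bool) \<Rightarrow> bool" where
  "complete_graph V E \<longleftrightarrow> (\<forall>u\<in>V. \<forall>v\<in>V. u \<noteq> v \<longrightarrow> E u v)"

definition two_cliques :: "'a set \<Rightarrow> ('a \<Rightarrow> 'a \<Rightarrow> bool) \<Rightarrow> bool" where
  "two_cliques V E \<longleftrightarrow> (\<exists>A B. A \<noteq> {} \<and> B \<noteq> {} \<and> A \<inter> B = {} \<and> A \<union> B = V
     \<and> complete_graph A E \<and> complete_graph B E
     \<and> (\<forall>a\<in>A. \<forall>b\<in>B. \<not> E a b))"

definition modprod_V :: "'a set \<Rightarrow> 'b set \<Rightarrow> ('a \<times> 'b) set" where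
  "modprod_V VG VH = VG \<times> VH"

definition modprod_E :: "'a set \<Rightarrow> ('a \<Rightarrow> 'a \<Rightarrow> bool) \<Rightarrow> 'b set \<Rightarrow> ('b \<Rightarrow> 'b \<Rightarrow> bool)
    \<Rightarrow> ('a \<times> 'b) \<Rightarrow> ('a \<times> 'b) \<Rightarrow> bool" where
  "modprod_E VG EG VH EH x y \<longleftrightarrow>
     (case x of (g, h) \<Rightarrow> case y of (g', h') \<Rightarrow>
       g \<in> VG \<and> g' \<in> VG \<and> h \<in> VH \<and> h' \<in> VH \<and> (g, h) \<noteq> (g', h') \<and>
       ((g = g' \<and> EH h h') \<or> (EG g g' \<and> h = h') \<or> (EG g g' \<and> EH h h')
        \<or> (g \<noteq> g' \<and> h \<noteq> h' \<and> \<not> EG g g' \<and> \<not> EH h h')))"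

end

theory Submission
  imports Defs
begin

lemma walk_in: "walk_len V E n x y \<Longrightarrow> x \<in> V \<and> y \<in> V"
  by (induction rule: walk_len.induct) auto

lemma walk_0: "walk_len V E 0 x y \<longleftrightarrow> x \<in> V \<and> x = y"
  by (auto elim: walk_len.cases intro: walk_len.intros)

lemma walk_Suc: "walk_len V E (Suc n) x y \<longleftrightarrow> (\<exists>w. E x w \<and> x \<in> V \<and> walk_len V E n w y)"
  by (auto elim: walk_len.cases intro: walk_len.intros)

lemma gdist_le: "gdist V E u v \<le> enat n \<longleftrightarrow> (\<exists>m\<le>n. walk_len V E m u v)"
proof
  let ?S = "{enat n | n. walk_len V E n u v}"
  assume a: "gdist V E u v \<le> enat n"
  have ne: "?S \<noteq> {}"
  proof
    assume "?S = {}"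
    then have "gdist V E u v = \<infinity>" unfolding gdist_def by (simp add: top_enat_def)
    with a show False by simp
  qed
  then have "gdist V E u v \<in> ?S" unfolding gdist_def Inf_enat_def
    by (simp add: LeastI_ex) (smt (verit, best) LeastI_ex mem_Collect_eq)
  then obtain m where "gdist V E u v = enat m" "walk_len V E m u v" by auto
  with a show "\<exists>m\<le>n. walk_len V E m u v" by auto
next
  assume "\<exists>m\<le>n. walk_len V E m u v"
  then obtain m where "m \<le> n" "walk_len V E m u v" by auto
  then have "gdist V E u v \<le> enat m" unfolding gdist_def by (auto intro: Inf_lower)
  with \<open>m \<le> n\<close> show "gdist V E u v \<le> enat n" by (meson enat_ord_simps(1) order_trans)
qed

lemma ex_le1: "(\<exists>m::nat\<le>1. P m) \<longleftrightarrow> P 0 \<or> P 1"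
  by (metis le_Suc_eq le_zero_eq One_nat_def)
lemma ex_le2: "(\<exists>m::nat\<le>2. P m) \<longleftrightarrow> P 0 \<or> P 1 \<or> P 2"
  by (metis ex_le1 le_Suc_eq numeral_2_eq_2 One_nat_def)
lemma ex_le3: "(\<exists>m::nat\<le>3. P m) \<longleftrightarrow> P 0 \<or> P 1 \<or> P 2 \<or> P 3"
  by (metis ex_le2 le_Suc_eq numeral_3_eq_3 numeral_2_eq_2)
lemma ex_le_Suc: "(\<exists>m\<le>Suc n. P m) \<longleftrightarrow> (\<exists>m\<le>n. P m) \<or> P (Suc n)"
  by (auto simp: le_Suc_eq)

lemma sg_mem: "simple_graph V E \<Longrightarrow> E x y \<Longrightarrow> x \<in> V \<and> y \<in> V"
  by (auto simp: simple_graph_def)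

lemma gle1: "simple_graph V E \<Longrightarrow> u \<in> V \<Longrightarrow> v \<in> V \<Longrightarrow>
   gdist V E u v \<le> 1 \<longleftrightarrow> (u = v \<or> E u v)"
  unfolding one_enat_def gdist_le ex_le1 by (auto simp: walk_0 walk_Suc dest: sg_mem)

lemma gle2: "simple_graph V E \<Longrightarrow> u \<in> V \<Longrightarrow> v \<in> V \<Longrightarrow>
   gdist V E u v \<le> 2 \<longleftrightarrow> (u = v \<or> E u v \<or> (\<exists>w. E u w \<and> E w v))"
  unfolding numeral_eq_enat gdist_le ex_le2 by (auto simp: numeral_2_eq_2 walk_0 walk_Suc dest: sg_mem)

lemma gle3: "simple_graph V E \<Longrightarrow> u \<in> V \<Longrightarrow> v \<in> V \<Longrightarrow>
   gdist V E u v \<le> 3 \<longleftrightarrow> (u = v \<or> E u v \<or> (\<exists>w. E u w \<and> E w v) \<or> (\<exists>w z. E u w \<and> E w z \<and> E z v))"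
  unfolding numeral_eq_enat gdist_le ex_le3 by (auto simp: numeral_3_eq_3 numeral_2_eq_2 walk_0 walk_Suc dest: sg_mem)

lemma gle0: "u \<in> V \<Longrightarrow> gdist V E u v = 0 \<longleftrightarrow> u = v"
  using gdist_le[of V E u v 0] by (auto simp: walk_0 intro: walk0) (metis le_zero_eq zero_enat_def)

lemma enat_eq1: "(x::enat) = 1 \<longleftrightarrow> x \<le> 1 \<and> \<not> x \<le> 0"
  by (cases x) (auto simp: one_enat_def zero_enat_def)
lemma enat_eq2: "(x::enat) = 2 \<longleftrightarrow> x \<le> 2 \<and> \<not> x \<le> 1"
  by (cases x) (auto simp: numeral_eq_enat one_enat_def)
lemma enat_eq3: "(x::enat) = 3 \<longleftrightarrow> x \<le> 3 \<and> \<not> x \<le> 2"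
  by (cases x) (auto simp: numeral_eq_enat)
lemma enat_le0: "(x::enat) \<le> 0 \<longleftrightarrow> x = 0" by simp


definition cadj :: "'a set \<Rightarrow> ('a \<Rightarrow> 'a \<Rightarrow> bool) \<Rightarrow> 'a \<Rightarrow> 'a \<Rightarrow> bool" where
  "cadj V E x y \<longleftrightarrow> x \<in> V \<and> y \<in> V \<and> (x = y \<or> E x y)"
definition DD :: "'a set \<Rightarrow> ('a \<Rightarrow> 'a \<Rightarrow> bool) \<Rightarrow> 'a \<Rightarrow> 'a \<Rightarrow> bool" where
  "DD V E x y \<longleftrightarrow> x \<in> V \<and> y \<in> V \<and> (\<forall>b. \<not> (cadj V E x b \<and> cadj V E y b))"
definition twin :: "'a set \<Rightarrow> ('a \<Rightarrow> 'a \<Rightarrow> bool) \<Rightarrow> 'a \<Rightarrow> 'a \<Rightarrow> bool" where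
  "twin V E x y \<longleftrightarrow> (\<forall>a. cadj V E x a \<longleftrightarrow> cadj V E y a)"
definition farF where
  "farF VG EG VH EH g h c d \<longleftrightarrow>
    (twin VG EG g c \<and> DD VH EH h d \<and> (universal VG EG g \<or> gamma_pair VH EH h d)) \<or>
    (twin VH EH h d \<and> DD VG EG g c \<and> (universal VH EH h \<or> gamma_pair VG EG g c))"

lemma cadj_refl: "x \<in> V \<Longrightarrow> cadj V E x x" by (simp add: cadj_def)
lemma cadj_mem: "cadj V E x y \<Longrightarrow> x \<in> V \<and> y \<in> V" by (simp add: cadj_def)
lemma cadj_sym: "simple_graph V E \<Longrightarrow> cadj V E x y \<Longrightarrow> cadj V E y x"
  by (auto simp: cadj_def simple_graph_def)

lemma univ_iff: "universal V E g \<longleftrightarrow> g \<in> V \<and> (\<forall>a\<in>V. cadj V E g a)"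
  by (auto simp: universal_def closed_nbhd_def cadj_def)

lemma gamma_iff0: "gamma_pair V E h d \<longleftrightarrow> DD V E h d \<and> (\<forall>b\<in>V. cadj V E h b \<or> cadj V E d b)"
proof (cases "h \<in> V \<and> d \<in> V")
  case True
  have A: "\<And>x. x \<in> V \<Longrightarrow> closed_nbhd V E x = {b. cadj V E x b}" by (auto simp: closed_nbhd_def cadj_def)
  have i: "{b. cadj V E h b} \<inter> {b. cadj V E d b} = {} \<longleftrightarrow> (\<forall>b. \<not> (cadj V E h b \<and> cadj V E d b))" by blast
  have u: "{b. cadj V E h b} \<union> {b. cadj V E d b} = V \<longleftrightarrow> (\<forall>b\<in>V. cadj V E h b \<or> cadj V E d b)"
    using cadj_mem[of V E h] cadj_mem[of V E d] by blast
  have n: "(\<forall>b. \<not> (cadj V E h b \<and> cadj V E d b)) \<Longrightarrow> h \<noteq> d" using True cadj_refl[of h V E] by blast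
  show ?thesis unfolding gamma_pair_def DD_def using True A[of h] A[of d] i u n by auto
qed (auto simp: gamma_pair_def DD_def)
lemma gamma_iff: "simple_graph V E \<Longrightarrow> gamma_pair V E h d \<longleftrightarrow> DD V E h d \<and> (\<forall>b\<in>V. cadj V E h b \<or> cadj V E d b)"
  by (rule gamma_iff0)

lemma cn_mem: "x \<in> V \<Longrightarrow> b \<in> closed_nbhd V E x \<longleftrightarrow> cadj V E x b"
  by (auto simp: closed_nbhd_def cadj_def)

lemma cn_eq: "x \<in> V \<Longrightarrow> y \<in> V \<Longrightarrow> closed_nbhd V E x = closed_nbhd V E y \<longleftrightarrow> twin V E x y"
  by (auto simp: twin_def closed_nbhd_def cadj_def)

lemma gle1c: "simple_graph V E \<Longrightarrow> u \<in> V \<Longrightarrow> v \<in> V \<Longrightarrow> gdist V E u v \<le> 1 \<longleftrightarrow> cadj V E u v"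
  by (simp add: gle1 cadj_def)

lemma gle2c: "simple_graph V E \<Longrightarrow> u \<in> V \<Longrightarrow> v \<in> V \<Longrightarrow> gdist V E u v \<le> 2 \<longleftrightarrow> \<not> DD V E u v"
proof -
  assume a: "simple_graph V E" "u \<in> V" "v \<in> V"
  have sym: "\<And>x y. E x y \<Longrightarrow> E y x" and mem: "\<And>x y. E x y \<Longrightarrow> x \<in> V \<and> y \<in> V"
    using a(1) unfolding simple_graph_def by blast+
  show ?thesis unfolding gle2[OF a] DD_def cadj_def using a(2,3) sym mem by blast
qed

lemma EP_iff: "modprod_E VG EG VH EH (g,h) (a,b) \<longleftrightarrow> g \<in> VG \<and> a \<in> VG \<and> h \<in> VH \<and> b \<in> VH \<and> (g,h) \<noteq> (a,b)
   \<and> (cadj VG EG g a \<longleftrightarrow> cadj VH EH h b)"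
  unfolding modprod_E_def cadj_def by auto

lemma P_sg: "simple_graph VG EG \<Longrightarrow> simple_graph VH EH \<Longrightarrow>
  simple_graph (modprod_V VG VH) (modprod_E VG EG VH EH)"
  unfolding simple_graph_def modprod_V_def modprod_E_def by auto

lemma EP_swap: "modprod_E VH EH VG EG (h,g) (d,c) \<longleftrightarrow> modprod_E VG EG VH EH (g,h) (c,d)"
  unfolding EP_iff by auto

lemma farF_swap: "farF VH EH VG EG h g d c \<longleftrightarrow> farF VG EG VH EH g h c d"
  unfolding farF_def by auto

lemma formA_notclose:
  assumes G: "simple_graph VG EG" and H: "simple_graph VH EH"
    and m: "g \<in> VG" "c \<in> VG" "h \<in> VH" "d \<in> VH"
    and tw: "twin VG EG g c" and D: "DD VH EH h d"
    and ug: "universal VG EG g \<or> gamma_pair VH EH h d"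
  shows "(g,h) \<noteq> (c,d) \<and> \<not> modprod_E VG EG VH EH (g,h) (c,d) \<and>
      \<not> (\<exists>a b. modprod_E VG EG VH EH (g,h) (a,b) \<and> modprod_E VG EG VH EH (a,b) (c,d))"
proof (intro conjI notI)
  have nhd: "\<not> cadj VH EH h d" using D m cadj_refl[of d VH EH] unfolding DD_def by blast
  then show "(g, h) = (c, d) \<Longrightarrow> False" using cadj_refl[of h VH EH] m by auto
  have gc: "cadj VG EG g c" using tw m cadj_refl[of c VG EG] unfolding twin_def by blast
  show "modprod_E VG EG VH EH (g, h) (c, d) \<Longrightarrow> False" using gc nhd unfolding EP_iff by blast
  assume "\<exists>a b. modprod_E VG EG VH EH (g, h) (a, b) \<and> modprod_E VG EG VH EH (a, b) (c, d)"
  then obtain a b where e1: "modprod_E VG EG VH EH (g, h) (a, b)" and e2: "modprod_E VG EG VH EH (a, b) (c, d)"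
    by blast
  have ab: "a \<in> VG" "b \<in> VH" using e1 unfolding EP_iff by auto
  have "cadj VG EG g a \<longleftrightarrow> cadj VH EH h b" using e1 unfolding EP_iff by blast
  moreover have "cadj VG EG a c \<longleftrightarrow> cadj VH EH b d" using e2 unfolding EP_iff by blast
  moreover have "cadj VG EG g a \<longleftrightarrow> cadj VG EG a c" using tw cadj_sym[OF G] unfolding twin_def by blast
  moreover have "cadj VH EH b d \<longleftrightarrow> cadj VH EH d b" using cadj_sym[OF H] by blast
  moreover have "\<not> (cadj VH EH h b \<and> cadj VH EH d b)" using D unfolding DD_def by blast
  ultimately have "\<not> cadj VG EG g a" "\<not> cadj VH EH h b" "\<not> cadj VH EH d b" by blast+
  then show False using ug ab unfolding univ_iff gamma_iff[OF H] by blast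
qed

lemma notclose_far_A:
  assumes G: "simple_graph VG EG" and H: "simple_graph VH EH"
    and m: "g \<in> VG" "c \<in> VG" "h \<in> VH" "d \<in> VH"
    and nc: "\<not> ((g,h) = (c,d) \<or> modprod_E VG EG VH EH (g,h) (c,d) \<or>
      (\<exists>a b. modprod_E VG EG VH EH (g,h) (a,b) \<and> modprod_E VG EG VH EH (a,b) (c,d)))"
    and gc: "cadj VG EG g c"
  shows "twin VG EG g c \<and> DD VH EH h d \<and> (universal VG EG g \<or> gamma_pair VH EH h d)"
proof -
  let ?E = "modprod_E VG EG VH EH"
  have ncn: "\<And>a b. ?E (g,h) (a,b) \<Longrightarrow> ?E (a,b) (c,d) \<Longrightarrow> False" using nc by blast
  have nhd: "\<not> cadj VH EH h d" using nc gc m unfolding EP_iff by blast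
  have hd: "h \<noteq> d" using nhd m cadj_refl[of h VH EH] by auto
  have cg: "cadj VG EG c g" using cadj_sym[OF G] gc by blast
  have D: "DD VH EH h d"
    unfolding DD_def
  proof (intro conjI allI notI)
    fix b assume b: "cadj VH EH h b \<and> cadj VH EH d b"
    then have bh: "b \<noteq> h" using nhd cadj_sym[OF H] by blast
    have bd: "b \<noteq> d" using b nhd by blast
    have "?E (g,h) (g,b)" unfolding EP_iff using b bh m cadj_refl[of g VG EG] cadj_mem[of VH EH h b] by auto
    moreover have "?E (g,b) (c,d)" unfolding EP_iff using b bd m gc cadj_sym[OF H] cadj_mem[of VH EH h b] by auto
    ultimately show False using ncn by blast
  qed (use m in auto)
  have tw: "twin VG EG g c"
    unfolding twin_def
  proof (intro allI iffI)
    fix a assume a: "cadj VG EG g a"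
    show "cadj VG EG c a"
    proof (rule ccontr)
      assume na: "\<not> cadj VG EG c a"
      have "a \<noteq> g" using na cg by blast
      then have "?E (g,h) (a,h)" unfolding EP_iff using a m cadj_refl[of h VH EH] cadj_mem[of VG EG g a] by auto
      moreover have "?E (a,h) (c,d)" unfolding EP_iff using a na hd nhd m cadj_sym[OF G] cadj_mem[of VG EG g a] by auto
      ultimately show False using ncn by blast
    qed
  next
    fix a assume a: "cadj VG EG c a"
    show "cadj VG EG g a"
    proof (rule ccontr)
      assume na: "\<not> cadj VG EG g a"
      have "a \<noteq> c" using na gc by blast
      have "?E (g,h) (a,d)" unfolding EP_iff using a na hd nhd m cadj_mem[of VG EG c a] by auto
      moreover have "?E (a,d) (c,d)" unfolding EP_iff using a \<open>a \<noteq> c\<close> m cadj_refl[of d VH EH] cadj_sym[OF G] cadj_mem[of VG EG c a] by auto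
      ultimately show False using ncn by blast
    qed
  qed
  have "gamma_pair VH EH h d" if nu: "\<not> universal VG EG g"
  proof -
    obtain a where a: "a \<in> VG" "\<not> cadj VG EG g a" using m nu unfolding univ_iff by blast
    have "\<forall>b\<in>VH. cadj VH EH h b \<or> cadj VH EH d b"
    proof (rule ballI, rule ccontr)
      fix b assume b: "b \<in> VH" "\<not> (cadj VH EH h b \<or> cadj VH EH d b)"
      have "a \<noteq> g" using a m cadj_refl[of g VG EG] by auto
      have ac: "a \<noteq> c" using a gc by blast
      have "?E (g,h) (a,b)" unfolding EP_iff using \<open>a \<noteq> g\<close> a b m by auto
      moreover have "?E (a,b) (c,d)" using ac unfolding EP_iff using a b m tw cadj_sym[OF G] cadj_sym[OF H] unfolding twin_def by blast
      ultimately show False using ncn by blast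
    qed
    then show "gamma_pair VH EH h d" using D unfolding gamma_iff[OF H] by blast
  qed
  with D tw show ?thesis by blast
qed

lemma close_iff:
  assumes G: "simple_graph VG EG" and H: "simple_graph VH EH"
    and m: "g \<in> VG" "c \<in> VG" "h \<in> VH" "d \<in> VH"
  shows "((g,h) = (c,d) \<or> modprod_E VG EG VH EH (g,h) (c,d) \<or>
      (\<exists>a b. modprod_E VG EG VH EH (g,h) (a,b) \<and> modprod_E VG EG VH EH (a,b) (c,d)))
   \<longleftrightarrow> \<not> farF VG EG VH EH g h c d"
proof
  assume cl: "(g,h) = (c,d) \<or> modprod_E VG EG VH EH (g,h) (c,d) \<or>
      (\<exists>a b. modprod_E VG EG VH EH (g,h) (a,b) \<and> modprod_E VG EG VH EH (a,b) (c,d))"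
  show "\<not> farF VG EG VH EH g h c d"
  proof
    assume "farF VG EG VH EH g h c d"
    then consider "twin VG EG g c \<and> DD VH EH h d \<and> (universal VG EG g \<or> gamma_pair VH EH h d)"
      | "twin VH EH h d \<and> DD VG EG g c \<and> (universal VH EH h \<or> gamma_pair VG EG g c)"
      unfolding farF_def by blast
    then show False
    proof cases
      case 1 then show ?thesis using formA_notclose[OF G H m] cl by blast
    next
      case 2
      then have "(h,g) \<noteq> (d,c) \<and> \<not> modprod_E VH EH VG EG (h,g) (d,c) \<and>
      \<not> (\<exists>a b. modprod_E VH EH VG EG (h,g) (a,b) \<and> modprod_E VH EH VG EG (a,b) (d,c))"
        using formA_notclose[OF H G m(3,4,1,2)] by blast
      then show ?thesis using cl EP_swap by (metis prod.inject)
    qed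
  qed
next
  assume nf: "\<not> farF VG EG VH EH g h c d"
  show "(g,h) = (c,d) \<or> modprod_E VG EG VH EH (g,h) (c,d) \<or>
      (\<exists>a b. modprod_E VG EG VH EH (g,h) (a,b) \<and> modprod_E VG EG VH EH (a,b) (c,d))"
  proof (rule ccontr)
    assume nc: "\<not> ?thesis"
    have "cadj VG EG g c \<or> cadj VH EH h d"
    proof (rule ccontr)
      assume "\<not> ?thesis"
      then have "modprod_E VG EG VH EH (g,h) (c,d)" using nc m unfolding EP_iff by auto
      then show False using nc by blast
    qed
    then show False
    proof
      assume "cadj VG EG g c"
      then show False using notclose_far_A[OF G H m nc] nf unfolding farF_def by blast
    next
      assume hd: "cadj VH EH h d"
      have nc': "\<not> ((h,g) = (d,c) \<or> modprod_E VH EH VG EG (h,g) (d,c) \<or>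
      (\<exists>a b. modprod_E VH EH VG EG (h,g) (a,b) \<and> modprod_E VH EH VG EG (a,b) (d,c)))"
        using nc EP_swap by (metis prod.inject)
      show False using notclose_far_A[OF H G m(3,4,1,2) nc' hd] nf unfolding farF_def by blast
    qed
  qed
qed


lemma DD_sym: "DD V E x y \<longleftrightarrow> DD V E y x" unfolding DD_def by blast
lemma gamma_sym: "gamma_pair V E x y \<longleftrightarrow> gamma_pair V E y x"
  unfolding gamma_iff0 DD_def by auto
lemma twin_sym: "twin V E x y \<longleftrightarrow> twin V E y x" unfolding twin_def by blast
lemma twin_refl: "twin V E x x" unfolding twin_def by blast
lemma E_cadj: "simple_graph V E \<Longrightarrow> E x y \<Longrightarrow> cadj V E x y \<and> x \<noteq> y"
  unfolding simple_graph_def cadj_def by blast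
lemma cadj_E: "cadj V E x y \<Longrightarrow> x \<noteq> y \<Longrightarrow> E x y"
  unfolding cadj_def by blast
lemma DD_mem: "DD V E x y \<Longrightarrow> x \<in> V \<and> y \<in> V" unfolding DD_def by blast
lemma DD_not_cadj: "DD V E x y \<Longrightarrow> \<not> cadj V E x y"
  unfolding DD_def using cadj_refl[of y V E] by blast
lemma DD_cn: "DD V E x y \<Longrightarrow> cadj V E x b \<Longrightarrow> cadj V E y b \<Longrightarrow> False"
  unfolding DD_def by blast
lemma twin_univ: "twin V E g c \<Longrightarrow> g \<in> V \<Longrightarrow> universal V E g \<longleftrightarrow> universal V E c"
proof -
  assume t: "twin V E g c" and g: "g \<in> V"
  have c: "c \<in> V" using t g cadj_refl[of g V E] cadj_mem[of V E c g] unfolding twin_def by blast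
  have "\<forall>a. cadj V E g a = cadj V E c a" using t unfolding twin_def by blast
  then show ?thesis unfolding univ_iff using g c by simp
qed

lemma farF_sym1:
  assumes m: "g \<in> VG" "h \<in> VH"
    and f: "farF VG EG VH EH g h c d"
  shows "farF VG EG VH EH c d g h"
proof -
  from f consider (A) "twin VG EG g c" "DD VH EH h d" "universal VG EG g \<or> gamma_pair VH EH h d"
    | (B) "twin VH EH h d" "DD VG EG g c" "universal VH EH h \<or> gamma_pair VG EG g c"
    unfolding farF_def by blast
  then show ?thesis
  proof cases
    case A
    have "twin VG EG c g" using A(1) twin_sym by metis
    moreover have "DD VH EH d h" using A(2) DD_sym by metis
    moreover have "universal VG EG c \<or> gamma_pair VH EH d h"
      using A(3) twin_univ[OF A(1) m(1)] gamma_sym by metis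
    ultimately show ?thesis unfolding farF_def by blast
  next
    case B
    have "twin VH EH d h" using B(1) twin_sym by metis
    moreover have "DD VG EG c g" using B(2) DD_sym by metis
    moreover have "universal VH EH d \<or> gamma_pair VG EG c g"
      using B(3) twin_univ[OF B(1) m(2)] gamma_sym by metis
    ultimately show ?thesis unfolding farF_def by blast
  qed
qed

lemma farF_sym:
  assumes m: "g \<in> VG" "c \<in> VG" "h \<in> VH" "d \<in> VH"
  shows "farF VG EG VH EH g h c d \<longleftrightarrow> farF VG EG VH EH c d g h"
  using farF_sym1[of g VG h VH] farF_sym1[of c VG d VH] m by blast

definition IVf where
  "IVf VG EG VH EH g h g' h' \<longleftrightarrow> universal VG EG g \<and> universal VG EG g' \<and> \<not> cadj VH EH h h'
     \<and> \<not> DD VH EH h h' \<and> (\<forall>x. EH h x \<longrightarrow> \<not> DD VH EH x h') \<and> (\<forall>y. EH h' y \<longrightarrow> \<not> DD VH EH y h)"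
definition Vf where
  "Vf VG EG VH EH g h g' h' \<longleftrightarrow> universal VG EG g \<and> \<not> universal VG EG g' \<and> \<not> cadj VH EH h h'
     \<and> \<not> DD VH EH h h' \<and> (\<forall>z. cadj VH EH h' z \<longrightarrow> \<not> DD VH EH h z) \<and> (\<forall>x. \<not> gamma_pair VH EH h' x)"
definition MMf where
  "MMf VG EG VH EH g h g' h' \<longleftrightarrow>
     (\<forall>c d. modprod_E VG EG VH EH (g,h) (c,d) \<longrightarrow> \<not> farF VG EG VH EH c d g' h') \<and>
     (\<forall>c d. modprod_E VG EG VH EH (g',h') (c,d) \<longrightarrow> \<not> farF VG EG VH EH c d g h)"
definition bdf where
  "bdf VG EG VH EH g h \<longleftrightarrow> (\<exists>c\<in>VG. \<exists>d\<in>VH. farF VG EG VH EH g h c d)"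

lemma IVf_sym: "simple_graph VH EH \<Longrightarrow> IVf VG EG VH EH g h g' h' \<longleftrightarrow> IVf VG EG VH EH g' h' g h"
proof -
  assume H: "simple_graph VH EH"
  have c: "cadj VH EH h h' \<longleftrightarrow> cadj VH EH h' h" using cadj_sym[OF H] by blast
  have d: "DD VH EH h h' \<longleftrightarrow> DD VH EH h' h" by (rule DD_sym)
  show ?thesis unfolding IVf_def c d by blast
qed

lemma MMf_sym: "MMf VG EG VH EH g h g' h' \<longleftrightarrow> MMf VG EG VH EH g' h' g h"
  unfolding MMf_def by blast

lemma MMf_swap: "MMf VH EH VG EG h g h' g' \<longleftrightarrow> MMf VG EG VH EH g h g' h'"
  unfolding MMf_def by (auto simp: EP_swap[of VH EH VG EG] farF_swap[of VH EH VG EG])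

lemma formA_core:
  assumes G: "simple_graph VG EG" and H: "simple_graph VH EH"
    and m: "g \<in> VG" "g' \<in> VG" "h \<in> VH" "h' \<in> VH" "b \<in> VH"
    and ne: "(g,h) \<noteq> (g',h')" and nadj: "\<not> modprod_E VG EG VH EH (g,h) (g',h')"
    and nfar: "\<not> farF VG EG VH EH g h g' h'"
    and M1: "\<And>c d. modprod_E VG EG VH EH (g',h') (c,d) \<Longrightarrow> \<not> farF VG EG VH EH c d g h"
    and M2: "\<And>c d. modprod_E VG EG VH EH (g,h) (c,d) \<Longrightarrow> \<not> farF VG EG VH EH c d g' h'"
    and Db: "DD VH EH h b" and ub: "universal VG EG g \<or> gamma_pair VH EH h b"
  shows "IVf VG EG VH EH g h g' h' \<or> Vf VG EG VH EH g h g' h'"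
proof -
  let ?E = "modprod_E VG EG VH EH"
  have far_g: "\<And>x d. DD VH EH d h \<Longrightarrow> universal VG EG x \<or> gamma_pair VH EH d h \<Longrightarrow> farF VG EG VH EH x d x h"
    unfolding farF_def by (simp add: twin_refl)
  consider (I) "cadj VG EG g g' \<and> \<not> cadj VH EH h h'" | (II) "\<not> cadj VG EG g g' \<and> cadj VH EH h h'"
    using ne nadj m unfolding EP_iff by blast
  then show ?thesis
  proof cases
    case II
    have "g \<noteq> g'" using II m cadj_refl[of g VG EG] by auto
    have nb: "\<not> cadj VH EH h' b"
    proof
      assume "cadj VH EH h' b"
      then show False using DD_cn[OF Db, of h'] II cadj_sym[OF H] cadj_refl[of h' VH EH] m
        by (meson DD_cn Db)
    qed
    have "?E (g',h') (g,b)" unfolding EP_iff using m \<open>g \<noteq> g'\<close> nb II cadj_sym[OF G] by auto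
    moreover have "farF VG EG VH EH g b g h" using far_g[of b g] Db ub DD_sym[of VH EH h b] gamma_sym[of VH EH h b] by blast
    ultimately show ?thesis using M1 by blast
  next
    case I
    have g'g: "cadj VG EG g' g" using I cadj_sym[OF G] by blast
    have key: "\<not> (DD VH EH d h \<and> (universal VG EG g \<or> gamma_pair VH EH d h))" if hd: "cadj VH EH h' d" for d
    proof
      assume a: "DD VH EH d h \<and> (universal VG EG g \<or> gamma_pair VH EH d h)"
      show False
      proof (cases "(g,d) = (g',h')")
        case True
        then have "farF VG EG VH EH g h g' h'" using True a DD_sym[of VH EH d h] gamma_sym[of VH EH d h] unfolding farF_def by (simp add: twin_refl)
        then show False using nfar by blast
      next
        case False
        have "?E (g',h') (g,d)" unfolding EP_iff using False m g'g hd cadj_mem[of VH EH h' d] by auto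
        then show False using M1 far_g[of d g] a by blast
      qed
    qed
    show ?thesis
    proof (cases "universal VG EG g")
      case False
      then have gam: "gamma_pair VH EH h b" using ub by blast
      then have "cadj VH EH h h' \<or> cadj VH EH b h'" using m unfolding gamma_iff0 by blast
      then have "cadj VH EH h' b" using I cadj_sym[OF H] by blast
      then show ?thesis using key[of b] Db gam DD_sym[of VH EH h b] gamma_sym[of VH EH h b] by blast
    next
      case True
      have cl: "\<And>d. cadj VH EH h' d \<Longrightarrow> \<not> DD VH EH d h" using key True by blast
      have nD: "\<not> DD VH EH h h'" using cl[of h'] cadj_refl[of h' VH EH] m DD_sym[of VH EH h h'] by blast
      show ?thesis
      proof (cases "universal VG EG g'")
        case True
        have "\<not> DD VH EH x h'" if ex: "EH h x" for x
        proof
          assume dx: "DD VH EH x h'"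
          have "cadj VH EH h x" "h \<noteq> x" using E_cadj[OF H ex] by auto
          then have "?E (g,h) (g',x)" unfolding EP_iff using m I cadj_mem[of VH EH h x] by auto
          moreover have "farF VG EG VH EH g' x g' h'" using dx True unfolding farF_def by (simp add: twin_refl)
          ultimately show False using M2 by blast
        qed
        moreover have "\<not> DD VH EH y h" if "EH h' y" for y using cl E_cadj[OF H that] by blast
        ultimately show ?thesis unfolding IVf_def using \<open>universal VG EG g\<close> True I nD by blast
      next
        case False
        have "\<not> gamma_pair VH EH h' e" for e
        proof
          assume ge: "gamma_pair VH EH h' e"
          then have De: "DD VH EH h' e" and cov: "\<forall>z\<in>VH. cadj VH EH h' z \<or> cadj VH EH e z"
            unfolding gamma_iff0 by blast+
          have "cadj VH EH e h" using cov m I cadj_sym[OF H] by blast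
          then have he: "cadj VH EH h e" using cadj_sym[OF H] by blast
          have "e \<noteq> h" using De nD DD_sym[of VH EH h h'] by blast
          then have "?E (g,h) (g',e)" unfolding EP_iff using m I he cadj_mem[of VH EH h e] by auto
          moreover have "farF VG EG VH EH g' e g' h'" unfolding farF_def using De ge DD_sym[of VH EH h' e] gamma_sym[of VH EH h' e] by (simp add: twin_refl)
          ultimately show False using M2 by blast
        qed
        moreover have "\<forall>z. cadj VH EH h' z \<longrightarrow> \<not> DD VH EH h z" using cl DD_sym[of VH EH h] by blast
        ultimately show ?thesis unfolding Vf_def using \<open>universal VG EG g\<close> False I nD by blast
      qed
    qed
  qed
qed


lemma EP_sym: "simple_graph VG EG \<Longrightarrow> simple_graph VH EH \<Longrightarrow>
   modprod_E VG EG VH EH (g,h) (c,d) \<longleftrightarrow> modprod_E VG EG VH EH (c,d) (g,h)"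
  unfolding EP_iff using cadj_sym[of VG EG g c] cadj_sym[of VG EG c g] cadj_sym[of VH EH h d] cadj_sym[of VH EH d h]
  by blast

lemma revIV_half:
  assumes G: "simple_graph VG EG" and H: "simple_graph VH EH"
    and iv: "IVf VG EG VH EH g h g' h'"
  shows "\<forall>c d. modprod_E VG EG VH EH (g,h) (c,d) \<longrightarrow> \<not> farF VG EG VH EH c d g' h'"
proof (intro allI impI notI)
  fix c d assume e: "modprod_E VG EG VH EH (g,h) (c,d)" and f: "farF VG EG VH EH c d g' h'"
  have ug: "universal VG EG g" and ug': "universal VG EG g'" and nD: "\<not> DD VH EH h h'"
    and hx: "\<forall>x. EH h x \<longrightarrow> \<not> DD VH EH x h'" using iv unfolding IVf_def by blast+
  have cm: "c \<in> VG" "d \<in> VH" using e unfolding EP_iff by auto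
  have "cadj VG EG g c" using ug cm unfolding univ_iff by blast
  then have hd: "cadj VH EH h d" using e unfolding EP_iff by blast
  from f consider (A) "DD VH EH d h'" | (B) "DD VG EG c g'" unfolding farF_def by blast
  then show False
  proof cases
    case A
    show False
    proof (cases "d = h")
      case True then show False using A nD by simp
    next
      case False
      then have "EH h d" using hd cadj_E by metis
      then show False using hx A by blast
    qed
  next
    case B
    have "cadj VG EG g' c" using ug' cm unfolding univ_iff by blast
    then show False using DD_cn[OF B, of c] cadj_refl[of c VG EG] cm by blast
  qed
qed

lemma revIV:
  assumes G: "simple_graph VG EG" and H: "simple_graph VH EH"
    and iv: "IVf VG EG VH EH g h g' h'"
  shows "MMf VG EG VH EH g h g' h'"
proof -
  have iv': "IVf VG EG VH EH g' h' g h" using IVf_sym[OF H, of VG EG g h g' h'] iv by simp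
  show ?thesis unfolding MMf_def using revIV_half[OF G H iv] revIV_half[OF G H iv'] by blast
qed

lemma revV:
  assumes G: "simple_graph VG EG" and H: "simple_graph VH EH"
    and m: "g \<in> VG" "g' \<in> VG" "h \<in> VH" "h' \<in> VH"
    and v: "Vf VG EG VH EH g h g' h'"
  shows "MMf VG EG VH EH g h g' h'"
proof -
  have ug: "universal VG EG g" and nug': "\<not> universal VG EG g'" and nB: "\<not> cadj VH EH h h'"
    and cl: "\<forall>z. cadj VH EH h' z \<longrightarrow> \<not> DD VH EH h z" and ng: "\<forall>x. \<not> gamma_pair VH EH h' x"
    using v unfolding Vf_def by blast+
  have h1: "\<not> farF VG EG VH EH c d g' h'" if e: "modprod_E VG EG VH EH (g,h) (c,d)" for c d
  proof
    assume f: "farF VG EG VH EH c d g' h'"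
    have cm: "c \<in> VG" "d \<in> VH" using e unfolding EP_iff by auto
    have "cadj VG EG g c" using ug cm unfolding univ_iff by blast
    then have hd: "cadj VH EH h d" using e unfolding EP_iff by blast
    from f consider (A) "twin VG EG c g'" "universal VG EG c \<or> gamma_pair VH EH d h'"
      | (B) "twin VH EH d h'" unfolding farF_def by blast
    then show False
    proof cases
      case A
      have "universal VG EG c \<longleftrightarrow> universal VG EG g'" using twin_univ[OF A(1) cm(1)] .
      then show False using A(2) nug' ng gamma_sym[of VH EH d h'] by blast
    next
      case B
      have "cadj VH EH d h" using hd cadj_sym[OF H] by blast
      then have "cadj VH EH h' h" using B unfolding twin_def by blast
      then show False using nB cadj_sym[OF H] by blast
    qed
  qed
  have h2: "\<not> farF VG EG VH EH c d g h" if e: "modprod_E VG EG VH EH (g',h') (c,d)" for c d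
  proof
    assume f: "farF VG EG VH EH c d g h"
    have cm: "c \<in> VG" "d \<in> VH" using e unfolding EP_iff by auto
    from f consider (A) "twin VG EG c g" "DD VH EH d h" | (B) "DD VG EG c g" unfolding farF_def by blast
    then show False
    proof cases
      case A
      have "universal VG EG c" using twin_univ[OF A(1) cm(1)] ug by blast
      then have "cadj VG EG c g'" using m unfolding univ_iff by blast
      then have "cadj VG EG g' c" using cadj_sym[OF G] by blast
      then have "cadj VH EH h' d" using e unfolding EP_iff by blast
      then show False using cl A(2) DD_sym[of VH EH d h] by blast
    next
      case B
      have "cadj VG EG g c" using ug cm unfolding univ_iff by blast
      then show False using DD_cn[OF B, of c] cadj_refl[of c VG EG] cm by blast
    qed
  qed
  show ?thesis unfolding MMf_def using h1 h2 by blast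
qed

lemma core_fwd:
  assumes G: "simple_graph VG EG" and H: "simple_graph VH EH"
    and m: "g \<in> VG" "g' \<in> VG" "h \<in> VH" "h' \<in> VH"
    and ne: "(g,h) \<noteq> (g',h')" and nadj: "\<not> modprod_E VG EG VH EH (g,h) (g',h')"
    and nfar: "\<not> farF VG EG VH EH g h g' h'"
    and MM: "MMf VG EG VH EH g h g' h'" and bd: "bdf VG EG VH EH g h"
  shows "IVf VG EG VH EH g h g' h' \<or> Vf VG EG VH EH g h g' h' \<or>
         IVf VH EH VG EG h g h' g' \<or> Vf VH EH VG EG h g h' g'"
proof -
  obtain c d where cd: "c \<in> VG" "d \<in> VH" "farF VG EG VH EH g h c d" using bd unfolding bdf_def by blast
  then consider (A) "DD VH EH h d" "universal VG EG g \<or> gamma_pair VH EH h d"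
    | (B) "DD VG EG g c" "universal VH EH h \<or> gamma_pair VG EG g c" unfolding farF_def by blast
  then show ?thesis
  proof cases
    case A
    have M1: "\<And>c d. modprod_E VG EG VH EH (g',h') (c,d) \<Longrightarrow> \<not> farF VG EG VH EH c d g h"
      and M2: "\<And>c d. modprod_E VG EG VH EH (g,h) (c,d) \<Longrightarrow> \<not> farF VG EG VH EH c d g' h'"
      using MM unfolding MMf_def by blast+
    show ?thesis using formA_core[OF G H m cd(2) ne nadj nfar M1 M2 A] by blast
  next
    case B
    have MM': "MMf VH EH VG EG h g h' g'" using MM MMf_swap[of VH EH VG EG h g h' g'] by simp
    have M1: "\<And>c d. modprod_E VH EH VG EG (h',g') (c,d) \<Longrightarrow> \<not> farF VH EH VG EG c d h g"
      and M2: "\<And>c d. modprod_E VH EH VG EG (h,g) (c,d) \<Longrightarrow> \<not> farF VH EH VG EG c d h' g'"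
      using MM' unfolding MMf_def by blast+
    have ne': "(h,g) \<noteq> (h',g')" using ne by blast
    have nadj': "\<not> modprod_E VH EH VG EG (h,g) (h',g')" using nadj EP_swap[of VH EH VG EG] by blast
    have nfar': "\<not> farF VH EH VG EG h g h' g'" using nfar farF_swap[of VH EH VG EG] by blast
    show ?thesis using formA_core[OF H G m(3,4,1,2) cd(1) ne' nadj' nfar' M1 M2 B] by blast
  qed
qed

lemma core_equiv:
  assumes G: "simple_graph VG EG" and H: "simple_graph VH EH"
    and m: "g \<in> VG" "g' \<in> VG" "h \<in> VH" "h' \<in> VH"
    and ne: "(g,h) \<noteq> (g',h')" and nadj: "\<not> modprod_E VG EG VH EH (g,h) (g',h')"
    and nfar: "\<not> farF VG EG VH EH g h g' h'"
  shows "MMf VG EG VH EH g h g' h' \<longleftrightarrow>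
    ((\<not> bdf VG EG VH EH g h \<and> \<not> bdf VG EG VH EH g' h') \<or>
     IVf VG EG VH EH g h g' h' \<or> IVf VH EH VG EG h g h' g' \<or>
     Vf VG EG VH EH g h g' h' \<or> Vf VH EH VG EG h g h' g' \<or>
     Vf VG EG VH EH g' h' g h \<or> Vf VH EH VG EG h' g' h g)"
proof
  assume MM: "MMf VG EG VH EH g h g' h'"
  have ne': "(g',h') \<noteq> (g,h)" using ne by blast
  have nadj': "\<not> modprod_E VG EG VH EH (g',h') (g,h)" using nadj EP_sym[OF G H] by blast
  have nfar': "\<not> farF VG EG VH EH g' h' g h" using nfar farF_sym[OF m(1,2,3,4)] by blast
  have MM': "MMf VG EG VH EH g' h' g h" using MM MMf_sym[of VG EG VH EH g h g' h'] by simp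
  have s1: "IVf VG EG VH EH g' h' g h \<longleftrightarrow> IVf VG EG VH EH g h g' h'" using IVf_sym[OF H, of VG EG g' h' g h] by simp
  have s2: "IVf VH EH VG EG h' g' h g \<longleftrightarrow> IVf VH EH VG EG h g h' g'" using IVf_sym[OF G, of VH EH h' g' h g] by simp
  show "(\<not> bdf VG EG VH EH g h \<and> \<not> bdf VG EG VH EH g' h') \<or>
     IVf VG EG VH EH g h g' h' \<or> IVf VH EH VG EG h g h' g' \<or>
     Vf VG EG VH EH g h g' h' \<or> Vf VH EH VG EG h g h' g' \<or>
     Vf VG EG VH EH g' h' g h \<or> Vf VH EH VG EG h' g' h g"
    using core_fwd[OF G H m ne nadj nfar MM] core_fwd[OF G H m(2,1,4,3) ne' nadj' nfar' MM'] s1 s2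
    by blast
next
  assume R: "(\<not> bdf VG EG VH EH g h \<and> \<not> bdf VG EG VH EH g' h') \<or>
     IVf VG EG VH EH g h g' h' \<or> IVf VH EH VG EG h g h' g' \<or>
     Vf VG EG VH EH g h g' h' \<or> Vf VH EH VG EG h g h' g' \<or>
     Vf VG EG VH EH g' h' g h \<or> Vf VH EH VG EG h' g' h g"
  have nb: "MMf VG EG VH EH g h g' h'" if nb: "\<not> bdf VG EG VH EH g h" "\<not> bdf VG EG VH EH g' h'"
    unfolding MMf_def
  proof (intro conjI allI impI notI)
    fix c d assume e: "modprod_E VG EG VH EH (g,h) (c,d)" and f: "farF VG EG VH EH c d g' h'"
    have cm: "c \<in> VG" "d \<in> VH" using e unfolding EP_iff by auto
    then have "farF VG EG VH EH g' h' c d" using f farF_sym[of c VG g' d VH h'] m by blast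
    then show False using nb cm unfolding bdf_def by blast
  next
    fix c d assume e: "modprod_E VG EG VH EH (g',h') (c,d)" and f: "farF VG EG VH EH c d g h"
    have cm: "c \<in> VG" "d \<in> VH" using e unfolding EP_iff by auto
    then have "farF VG EG VH EH g h c d" using f farF_sym[of c VG g d VH h] m by blast
    then show False using nb cm unfolding bdf_def by blast
  qed
  from R show "MMf VG EG VH EH g h g' h'"
  proof (elim disjE)
    assume "\<not> bdf VG EG VH EH g h \<and> \<not> bdf VG EG VH EH g' h'" then show ?thesis using nb by blast
  next
    assume "IVf VG EG VH EH g h g' h'" then show ?thesis using revIV[OF G H] by blast
  next
    assume "IVf VH EH VG EG h g h' g'" then show ?thesis using revIV[OF H G] MMf_swap[of VH EH VG EG h g h' g'] by blast
  next
    assume "Vf VG EG VH EH g h g' h'" then show ?thesis using revV[OF G H m] by blast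
  next
    assume "Vf VH EH VG EG h g h' g'" then show ?thesis using revV[OF H G m(3,4,1,2)] MMf_swap[of VH EH VG EG h g h' g'] by blast
  next
    assume "Vf VG EG VH EH g' h' g h" then show ?thesis using revV[OF G H m(2,1,4,3)] MMf_sym[of VG EG VH EH g h g' h'] by blast
  next
    assume "Vf VH EH VG EG h' g' h g" then show ?thesis using revV[OF H G m(4,3,2,1)] MMf_swap[of VH EH VG EG h' g' h g] MMf_sym[of VG EG VH EH g h g' h'] by blast
  qed
qed


lemma diam_le3:
  assumes d: "gdiam V E = 3" and m: "u \<in> V" "v \<in> V"
  shows "gdist V E u v \<le> 3"
proof -
  have "gdist V E u v \<in> {gdist V E u v | u v. u \<in> V \<and> v \<in> V}" using m by blast
  then have "gdist V E u v \<le> gdiam V E" unfolding gdiam_def by (rule Sup_upper)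
  then show ?thesis using d by simp
qed

lemma gP2:
  assumes G: "simple_graph VG EG" and H: "simple_graph VH EH"
    and m: "g \<in> VG" "c \<in> VG" "h \<in> VH" "d \<in> VH"
  shows "gdist (modprod_V VG VH) (modprod_E VG EG VH EH) (g,h) (c,d) \<le> 2 \<longleftrightarrow> \<not> farF VG EG VH EH g h c d"
proof -
  have mm: "(g,h) \<in> modprod_V VG VH" "(c,d) \<in> modprod_V VG VH" using m unfolding modprod_V_def by auto
  show ?thesis unfolding gle2[OF P_sg[OF G H] mm] close_iff[OF G H m, symmetric] split_paired_Ex by blast
qed

lemma gP3:
  assumes G: "simple_graph VG EG" and H: "simple_graph VH EH"
    and diam3: "gdiam (modprod_V VG VH) (modprod_E VG EG VH EH) = 3"
    and m: "g \<in> VG" "c \<in> VG" "h \<in> VH" "d \<in> VH"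
  shows "gdist (modprod_V VG VH) (modprod_E VG EG VH EH) (g,h) (c,d) = 3 \<longleftrightarrow> farF VG EG VH EH g h c d"
proof -
  have mm: "(g,h) \<in> modprod_V VG VH" "(c,d) \<in> modprod_V VG VH" using m unfolding modprod_V_def by auto
  show ?thesis using enat_eq3 diam_le3[OF diam3 mm] gP2[OF G H m] by blast
qed

lemma boundary_iff:
  assumes G: "simple_graph VG EG" and H: "simple_graph VH EH"
    and diam3: "gdiam (modprod_V VG VH) (modprod_E VG EG VH EH) = 3"
    and m: "g \<in> VG" "h \<in> VH"
  shows "boundary_vertex (modprod_V VG VH) (modprod_E VG EG VH EH) (g,h) \<longleftrightarrow> bdf VG EG VH EH g h"
proof -
  have "boundary_vertex (modprod_V VG VH) (modprod_E VG EG VH EH) (g,h) \<longleftrightarrow>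
     (\<exists>c\<in>VG. \<exists>d\<in>VH. gdist (modprod_V VG VH) (modprod_E VG EG VH EH) (g,h) (c,d) = 3)"
    unfolding boundary_vertex_def diam3 using m by (auto simp: modprod_V_def)
  then show ?thesis unfolding bdf_def using gP3[OF G H diam3 m(1) _ m(2)] by auto
qed

lemma gdist3_half:
  assumes H: "simple_graph V E" and m: "h \<in> V" "h' \<in> V"
    and nc: "\<not> cadj V E h h'" and nD: "\<not> DD V E h h'" and ex: "E h x"
  shows "gdist V E x h' \<noteq> 3 \<longleftrightarrow> \<not> DD V E x h'"
proof -
  obtain b where b: "cadj V E h b" "cadj V E h' b" using nD m unfolding DD_def by blast
  have "b \<noteq> h" using b nc cadj_sym[OF H] by blast
  have "b \<noteq> h'" using b nc by blast
  have e1: "E h b" using b \<open>b \<noteq> h\<close> cadj_E by metis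
  have e2: "E b h'" using b \<open>b \<noteq> h'\<close> cadj_E cadj_sym[OF H] by metis
  have e0: "E x h" using ex H unfolding simple_graph_def by blast
  have x: "x \<in> V" using ex sg_mem[OF H] by blast
  have "gdist V E x h' \<le> 3" unfolding gle3[OF H x m(2)] using e0 e1 e2 by blast
  then show ?thesis using enat_eq3 gle2c[OF H x m(2)] by blast
qed

lemma d2_iff:
  assumes H: "simple_graph V E" and m: "h \<in> V" "h' \<in> V"
  shows "gdist V E h h' = 2 \<longleftrightarrow> \<not> cadj V E h h' \<and> \<not> DD V E h h'"
  using enat_eq2 gle2c[OF H m] gle1c[OF H m] by blast

lemma mmd2:
  assumes H: "simple_graph V E" and m: "h \<in> V" "h' \<in> V"
    and nc: "\<not> cadj V E h h'" and nD: "\<not> DD V E h h'"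
  shows "mmd V E h h' \<longleftrightarrow> (\<forall>x. E h x \<longrightarrow> \<not> DD V E x h') \<and> (\<forall>y. E h' y \<longrightarrow> \<not> DD V E y h)"
proof -
  have d: "gdist V E h h' = 2" using d2_iff[OF H m] nc nD by blast
  have nc': "\<not> cadj V E h' h" using nc cadj_sym[OF H] by blast
  have nD': "\<not> DD V E h' h" using nD DD_sym[of V E h h'] by blast
  have ne: "h \<noteq> h'" using nc cadj_refl[of h V E] m by blast
  have 3: "gdist V E h h' + 1 = 3" using d by simp
  show ?thesis unfolding mmd_def 3 using d m ne gdist3_half[OF H m nc nD] gdist3_half[OF H m(2,1) nc' nD']
    by auto
qed

lemma IV_iff:
  assumes H: "simple_graph VH EH" and m: "h \<in> VH" "h' \<in> VH"
  shows "(universal VG EG g \<and> universal VG EG g' \<and> gdist VH EH h h' = 2 \<and> mmd VH EH h h')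
     \<longleftrightarrow> IVf VG EG VH EH g h g' h'"
  unfolding IVf_def d2_iff[OF H m] using mmd2[OF H m] by blast

lemma V_iff:
  assumes H: "simple_graph VH EH" and m: "h \<in> VH" "h' \<in> VH"
  shows "(universal VG EG g \<and> \<not> universal VG EG g' \<and> gdist VH EH h h' = 2 \<and>
        (\<forall>h''\<in>closed_nbhd VH EH h'. gdist VH EH h h'' \<le> 2) \<and>
        \<not> (\<exists>x. gamma_pair VH EH h' x \<or> gamma_pair VH EH x h'))
     \<longleftrightarrow> Vf VG EG VH EH g h g' h'"
proof -
  have a: "(\<forall>h''\<in>closed_nbhd VH EH h'. gdist VH EH h h'' \<le> 2) \<longleftrightarrow> (\<forall>z. cadj VH EH h' z \<longrightarrow> \<not> DD VH EH h z)"
    using cn_mem[OF m(2), of _ EH] gle2c[OF H m(1)] cadj_mem[of VH EH h'] by metis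
  have b: "\<not> (\<exists>x. gamma_pair VH EH h' x \<or> gamma_pair VH EH x h') \<longleftrightarrow> (\<forall>x. \<not> gamma_pair VH EH h' x)"
    using gamma_sym[of VH EH h'] by blast
  show ?thesis unfolding Vf_def d2_iff[OF H m] a b by blast
qed

lemma mmd_adj:
  assumes H: "simple_graph V E" and m: "u \<in> V" "v \<in> V" and e: "E u v"
  shows "mmd V E u v \<longleftrightarrow> closed_nbhd V E u = closed_nbhd V E v"
proof -
  have ne: "u \<noteq> v" using e E_cadj[OF H] by blast
  have d1: "gdist V E u v = 1" using enat_eq1 gle1c[OF H m] gle0[OF m(1), of E v] ne E_cadj[OF H e] by simp
  have two: "gdist V E u v + 1 = 2" using d1 by (simp add: one_add_one)
  have half: "gdist V E x w \<noteq> 2 \<longleftrightarrow> cadj V E x w" if "E z x" "E z w" "w \<in> V" for x w z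
  proof -
    have x: "x \<in> V" using that(1) sg_mem[OF H] by blast
    have "E x z" using that(1) H unfolding simple_graph_def by blast
    then have "gdist V E x w \<le> 2" unfolding gle2[OF H x that(3)] using that(2) by blast
    then show ?thesis using enat_eq2 gle1c[OF H x that(3)] by blast
  qed
  have e': "E v u" using e H unfolding simple_graph_def by blast
  have "mmd V E u v \<longleftrightarrow> (\<forall>x. E u x \<longrightarrow> cadj V E x v) \<and> (\<forall>y. E v y \<longrightarrow> cadj V E y u)"
    unfolding mmd_def two using m ne d1 half[of u _ v] half[of v _ u] e e' by auto
  also have "\<dots> \<longleftrightarrow> twin V E u v"
    unfolding twin_def
  proof
    assume L: "(\<forall>x. E u x \<longrightarrow> cadj V E x v) \<and> (\<forall>y. E v y \<longrightarrow> cadj V E y u)"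
    show "\<forall>a. cadj V E u a = cadj V E v a"
    proof (intro allI iffI)
      fix a assume c: "cadj V E u a"
      show "cadj V E v a"
      proof (cases "a = u")
        case True then show ?thesis using E_cadj[OF H e'] by blast
      next
        case False
        then have "E u a" using c cadj_E by metis
        then show ?thesis using L cadj_sym[OF H] by blast
      qed
    next
      fix a assume c: "cadj V E v a"
      show "cadj V E u a"
      proof (cases "a = v")
        case True then show ?thesis using E_cadj[OF H e] by blast
      next
        case False
        then have "E v a" using c cadj_E by metis
        then show ?thesis using L cadj_sym[OF H] by blast
      qed
    qed
  next
    assume T: "\<forall>a. cadj V E u a = cadj V E v a"
    have "cadj V E x v" if "E u x" for x
      using T E_cadj[OF H that] cadj_sym[OF H] by blast
    moreover have "cadj V E y u" if "E v y" for y
      using T E_cadj[OF H that] cadj_sym[OF H] by blast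
    ultimately show "(\<forall>x. E u x \<longrightarrow> cadj V E x v) \<and> (\<forall>y. E v y \<longrightarrow> cadj V E y u)" by blast
  qed
  finally show ?thesis using cn_eq[OF m] by blast
qed

lemma mmd_3:
  assumes H: "simple_graph V E" and d: "gdiam V E = 3" and m: "u \<in> V" "v \<in> V"
    and g3: "gdist V E u v = 3"
  shows "mmd V E u v"
proof -
  have ne: "u \<noteq> v" using g3 gle0[OF m(1), of E v] by auto
  have 4: "gdist V E u v + 1 = 4" using g3 by simp
  have "\<And>x w. x \<in> V \<Longrightarrow> w \<in> V \<Longrightarrow> gdist V E x w \<noteq> 4"
    using diam_le3[OF d] by (metis numeral_le_iff semiring_norm(69) semiring_norm(72) enat_ord_number(1))
  then show ?thesis unfolding mmd_def 4 using m ne g3 sg_mem[OF H] by auto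
qed


lemma mmdP2:
  assumes G: "simple_graph VG EG" and H: "simple_graph VH EH"
    and diam3: "gdiam (modprod_V VG VH) (modprod_E VG EG VH EH) = 3"
    and m: "g \<in> VG" "g' \<in> VG" "h \<in> VH" "h' \<in> VH"
    and d2: "gdist (modprod_V VG VH) (modprod_E VG EG VH EH) (g,h) (g',h') = 2"
  shows "mmd (modprod_V VG VH) (modprod_E VG EG VH EH) (g,h) (g',h') \<longleftrightarrow> MMf VG EG VH EH g h g' h'"
proof -
  let ?V = "modprod_V VG VH" and ?E = "modprod_E VG EG VH EH"
  have mm: "(g,h) \<in> ?V" "(g',h') \<in> ?V" using m unfolding modprod_V_def by auto
  have ne: "(g,h) \<noteq> (g',h')" using d2 gle0[OF mm(1), of ?E "(g',h')"] by auto
  have 3: "gdist ?V ?E (g,h) (g',h') + 1 = 3" using d2 by simp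
  have A: "\<And>c d. ?E (g,h) (c,d) \<Longrightarrow> (gdist ?V ?E (c,d) (g',h') \<noteq> 3 \<longleftrightarrow> \<not> farF VG EG VH EH c d g' h')"
    using gP3[OF G H diam3 _ m(2) _ m(4)] unfolding EP_iff by blast
  have B: "\<And>c d. ?E (g',h') (c,d) \<Longrightarrow> (gdist ?V ?E (c,d) (g,h) \<noteq> 3 \<longleftrightarrow> \<not> farF VG EG VH EH c d g h)"
    using gP3[OF G H diam3 _ m(1) _ m(3)] unfolding EP_iff by blast
  have "mmd ?V ?E (g,h) (g',h') \<longleftrightarrow>
     (\<forall>x. ?E (g,h) x \<longrightarrow> gdist ?V ?E x (g',h') \<noteq> 3) \<and> (\<forall>y. ?E (g',h') y \<longrightarrow> gdist ?V ?E y (g,h) \<noteq> 3)"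
    unfolding mmd_def 3 using mm ne d2 by auto
  also have "\<dots> \<longleftrightarrow> MMf VG EG VH EH g h g' h'"
    unfolding MMf_def split_paired_All using A B by blast
  finally show ?thesis .
qed

lemma mism:
  assumes G: "simple_graph VG EG" and H: "simple_graph VH EH"
    and m: "g \<in> VG" "g' \<in> VG" "h \<in> VH" "h' \<in> VH"
    and R: "IVf VG EG VH EH g h g' h' \<or> IVf VH EH VG EG h g h' g' \<or>
     Vf VG EG VH EH g h g' h' \<or> Vf VH EH VG EG h g h' g' \<or>
     Vf VG EG VH EH g' h' g h \<or> Vf VH EH VG EG h' g' h g"
  shows "\<not> (cadj VG EG g g' \<longleftrightarrow> cadj VH EH h h')"
  using R m cadj_sym[OF G, of g g'] cadj_sym[OF G, of g' g] cadj_sym[OF H, of h h'] cadj_sym[OF H, of h' h]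
  unfolding IVf_def Vf_def univ_iff by blast

theorem mainTheorem6:
  fixes VG :: "'a set" and EG :: "'a \<Rightarrow> 'a \<Rightarrow> bool"
    and VH :: "'b set" and EH :: "'b \<Rightarrow> 'b \<Rightarrow> bool"
  assumes G: "simple_graph VG EG" and H: "simple_graph VH EH"
    and Gnc: "\<not> complete_graph VG EG" and Hnc: "\<not> complete_graph VH EH"
    and not_both: "\<not> (two_cliques VG EG \<and> two_cliques VH EH)"
    and diam3: "gdiam (modprod_V VG VH) (modprod_E VG EG VH EH) = 3"
    and u: "(g, h) \<in> modprod_V VG VH" and v: "(g', h') \<in> modprod_V VG VH"
  shows "SR_edge (modprod_V VG VH) (modprod_E VG EG VH EH) (g, h) (g', h') \<longleftrightarrow>
    ( ((g, h) \<noteq> (g', h') \<and>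
        closed_nbhd (modprod_V VG VH) (modprod_E VG EG VH EH) (g, h)
          = closed_nbhd (modprod_V VG VH) (modprod_E VG EG VH EH) (g', h'))
    \<or> (gdist (modprod_V VG VH) (modprod_E VG EG VH EH) (g, h) (g', h') = 2 \<and>
        \<not> boundary_vertex (modprod_V VG VH) (modprod_E VG EG VH EH) (g, h) \<and>
        \<not> boundary_vertex (modprod_V VG VH) (modprod_E VG EG VH EH) (g', h'))
    \<or> gdist (modprod_V VG VH) (modprod_E VG EG VH EH) (g, h) (g', h') = 3
    \<or> (universal VG EG g \<and> universal VG EG g' \<and> gdist VH EH h h' = 2 \<and> SR_edge VH EH h h')
    \<or> (universal VH EH h \<and> universal VH EH h' \<and> gdist VG EG g g' = 2 \<and> SR_edge VG EG g g')
    \<or> (universal VG EG g \<and> \<not> universal VG EG g' \<and> gdist VH EH h h' = 2 \<and>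
        (\<forall>h''\<in>closed_nbhd VH EH h'. gdist VH EH h h'' \<le> 2) \<and>
        \<not> (\<exists>x. gamma_pair VH EH h' x \<or> gamma_pair VH EH x h'))
    \<or> (universal VH EH h \<and> \<not> universal VH EH h' \<and> gdist VG EG g g' = 2 \<and>
        (\<forall>g''\<in>closed_nbhd VG EG g'. gdist VG EG g g'' \<le> 2) \<and>
        \<not> (\<exists>x. gamma_pair VG EG g' x \<or> gamma_pair VG EG x g'))
    \<or> (universal VG EG g' \<and> \<not> universal VG EG g \<and> gdist VH EH h' h = 2 \<and>
        (\<forall>h''\<in>closed_nbhd VH EH h. gdist VH EH h' h'' \<le> 2) \<and>
        \<not> (\<exists>x. gamma_pair VH EH h x \<or> gamma_pair VH EH x h))
    \<or> (universal VH EH h' \<and> \<not> universal VH EH h \<and> gdist VG EG g' g = 2 \<and>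
        (\<forall>g''\<in>closed_nbhd VG EG g. gdist VG EG g' g'' \<le> 2) \<and>
        \<not> (\<exists>x. gamma_pair VG EG g x \<or> gamma_pair VG EG x g)))"
proof -
  let ?V = "modprod_V VG VH" and ?E = "modprod_E VG EG VH EH"
  have P: "simple_graph ?V ?E" using P_sg[OF G H] .
  have m: "g \<in> VG" "g' \<in> VG" "h \<in> VH" "h' \<in> VH" using u v by (auto simp: modprod_V_def)
  note iva = IV_iff[OF H m(3,4), of VG EG g g']
  note ivb = IV_iff[OF G m(1,2), of VH EH h h']
  note v1 = V_iff[OF H m(3,4), of VG EG g g']
  note v2 = V_iff[OF G m(1,2), of VH EH h h']
  note v3 = V_iff[OF H m(4,3), of VG EG g' g]
  note v4 = V_iff[OF G m(2,1), of VH EH h' h]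
  note bu = boundary_iff[OF G H diam3 m(1,3)]
  note bv = boundary_iff[OF G H diam3 m(2,4)]
  let ?R = "IVf VG EG VH EH g h g' h' \<or> IVf VH EH VG EG h g h' g' \<or>
     Vf VG EG VH EH g h g' h' \<or> Vf VH EH VG EG h g h' g' \<or>
     Vf VG EG VH EH g' h' g h \<or> Vf VH EH VG EG h' g' h g"
  have mis: "?R \<Longrightarrow> \<not> (cadj VG EG g g' \<longleftrightarrow> cadj VH EH h h')" using mism[OF G H m] by blast
  have N: "?E (g,h) (g',h')" if "closed_nbhd ?V ?E (g,h) = closed_nbhd ?V ?E (g',h')" "(g,h) \<noteq> (g',h')"
  proof -
    have "(g',h') \<in> closed_nbhd ?V ?E (g',h')" using v unfolding closed_nbhd_def by blast
    then have "(g',h') \<in> closed_nbhd ?V ?E (g,h)" using that(1) by simp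
    then show ?thesis using that(2) unfolding closed_nbhd_def by auto
  qed
  have le1: "gdist ?V ?E (g,h) (g',h') \<le> 1 \<longleftrightarrow> (g,h) = (g',h') \<or> ?E (g,h) (g',h')"
    using gle1[OF P u v] .
  consider (eq) "(g,h) = (g',h')" | (adj) "(g,h) \<noteq> (g',h')" "?E (g,h) (g',h')"
    | (two) "(g,h) \<noteq> (g',h')" "\<not> ?E (g,h) (g',h')" "\<not> farF VG EG VH EH g h g' h'"
    | (three) "farF VG EG VH EH g h g' h'" by blast
  then show ?thesis
  proof cases
    case eq
    have d0: "gdist ?V ?E (g,h) (g',h') = 0" using eq gle0[OF u, of ?E "(g',h')"] by simp
    have nm: "\<not> mmd ?V ?E (g,h) (g',h')" using eq unfolding mmd_def by simp
    have "cadj VG EG g g' \<longleftrightarrow> cadj VH EH h h'" using eq m cadj_refl[of g VG EG] cadj_refl[of h VH EH] by auto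
    then show ?thesis unfolding iva ivb v1 v2 v3 v4 bu bv using nm d0 mis eq by auto
  next
    case adj
    have d1: "gdist ?V ?E (g,h) (g',h') = 1"
      using enat_eq1 le1 gle0[OF u, of ?E "(g',h')"] adj by auto
    have "cadj VG EG g g' \<longleftrightarrow> cadj VH EH h h'" using adj(2) unfolding EP_iff by blast
    then show ?thesis unfolding iva ivb v1 v2 v3 v4 bu bv using mmd_adj[OF P u v adj(2)] d1 mis adj by auto
  next
    case two
    have d2: "gdist ?V ?E (g,h) (g',h') = 2"
      using enat_eq2 le1 gP2[OF G H m(1,2,3,4)] two by auto
    have nN: "\<not> ((g,h) \<noteq> (g',h') \<and> closed_nbhd ?V ?E (g,h) = closed_nbhd ?V ?E (g',h'))"
      using N two by blast
    show ?thesis unfolding iva ivb v1 v2 v3 v4 bu bv using mmdP2[OF G H diam3 m d2] core_equiv[OF G H m two] d2 nN by auto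
  next
    case three
    have d3: "gdist ?V ?E (g,h) (g',h') = 3" using gP3[OF G H diam3 m(1,2,3,4)] three by blast
    show ?thesis unfolding iva ivb v1 v2 v3 v4 bu bv using mmd_3[OF P diam3 u v d3] d3 by auto
  qed
qed

end
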